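(* Let $S$ be the convergent sequence, i.e. a space homeomorphic to $\{0\}\cup\{1/n: n\in\mathbb{N}\}\subset\mathbb{R}$. A locally convex space $E$ is analytic if and only if $E$ is a continuous image of the space $C_{p}(S)$.
   Context: $C_p(S)$ is the space of continuous real-valued functions on $S$ with the pointwise convergence topology. A topological space is analytic if it is a continuous image of the space $\mathbb{N}^{\mathbb{N}}$ (homeomorphic to the space of irrationals). *)

theory Defs
  imports "HOL-Analysis.Analysis"
begin

definition tvs :: "'a::real_vector topology \<Rightarrow> bool" where
  "tvs T \<longleftrightarrow> topspace T = UNIV
     \<and> continuous_map (prod_topology T T) T (\<lambda>(x, y). x + y)
     \<and> continuous_map (prod_topology euclideanreal T) T (\<lambda>(c, x). c *\<^sub>R x)"

definition locally_convex_space :: "'a::real_vector topology \<Rightarrow> bool" where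
  "locally_convex_space T \<longleftrightarrow> tvs T \<and> Hausdorff_space T
     \<and> (\<forall>x U. openin T U \<and> x \<in> U \<longrightarrow> (\<exists>V. openin T V \<and> convex V \<and> x \<in> V \<and> V \<subseteq> U))"

definition baire_space :: "(nat \<Rightarrow> nat) topology" where
  "baire_space = product_topology (\<lambda>_. discrete_topology UNIV) UNIV"

definition continuous_image_of :: "'a topology \<Rightarrow> 'b topology \<Rightarrow> bool" where
  "continuous_image_of Y X \<longleftrightarrow> (\<exists>f. continuous_map X Y f \<and> f ` topspace X = topspace Y)"

definition analytic_space :: "'a topology \<Rightarrow> bool" where
  "analytic_space X \<longleftrightarrow> continuous_image_of X baire_space"

definition conv_seq :: "real set" where
  "conv_seq = insert 0 {1 / real n | n. n \<ge> 1}"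

definition Cp :: "real set \<Rightarrow> (real \<Rightarrow> real) topology" where
  "Cp A = subtopology (product_topology (\<lambda>_. euclideanreal) A)
            {f \<in> extensional A. continuous_on A f}"

end

theory Submission
  imports Defs
begin

lemma continuous_map_pointwise:
  assumes "\<And>x. x \<in> topspace X \<Longrightarrow> f x \<in> topspace Y"
    and "\<And>x V. x \<in> topspace X \<Longrightarrow> openin Y V \<Longrightarrow> f x \<in> V \<Longrightarrow>
           \<exists>U. openin X U \<and> x \<in> U \<and> (\<forall>y\<in>U. f y \<in> V)"
  shows "continuous_map X Y f"
  unfolding continuous_map_def
proof (intro conjI allI impI)
  show "f \<in> topspace X \<rightarrow> topspace Y" using assms(1) by blast
  fix V assume V: "openin Y V"
  show "openin X {x \<in> topspace X. f x \<in> V}"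
  proof (subst openin_subopen, intro ballI)
    fix x assume "x \<in> {x \<in> topspace X. f x \<in> V}"
    then obtain U where U: "openin X U" "x \<in> U" "\<forall>y\<in>U. f y \<in> V"
      using assms(2) V by blast
    then have "U \<subseteq> topspace X" by (simp add: openin_subset)
    then have "U \<subseteq> {x \<in> topspace X. f x \<in> V}" using U(3) by blast
    then show "\<exists>T. openin X T \<and> x \<in> T \<and> T \<subseteq> {x \<in> topspace X. f x \<in> V}" using U by blast
  qed
qed

lemma continuous_map_locally_eq:
  assumes "\<And>x. x \<in> topspace X \<Longrightarrow> \<exists>U g. openin X U \<and> x \<in> U \<and> continuous_map X Y g \<and> (\<forall>y\<in>U. f y = g y)"
  shows "continuous_map X Y f"
proof (rule continuous_map_pointwise)
  fix x assume x: "x \<in> topspace X"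
  then obtain U g where U: "openin X U" "x \<in> U" "continuous_map X Y g" "\<forall>y\<in>U. f y = g y" using assms by blast
  have "g x \<in> topspace Y" using U(3) x by (rule continuous_map_image_subset_topspace[THEN subsetD, OF _ imageI])
  then show "f x \<in> topspace Y" using U by simp
next
  fix x V assume x: "x \<in> topspace X" and V: "openin Y V" "f x \<in> V"
  then obtain U g where U: "openin X U" "x \<in> U" "continuous_map X Y g" "\<forall>y\<in>U. f y = g y" using assms by blast
  have "openin X {y \<in> topspace X. g y \<in> V}" using U(3) V(1) by (simp add: continuous_map_def)
  then have "openin X (U \<inter> {y \<in> topspace X. g y \<in> V})" using U(1) by (rule openin_Int[rotated])
  moreover have "x \<in> U \<inter> {y \<in> topspace X. g y \<in> V}" using U x V by auto
  moreover have "\<forall>y\<in>U \<inter> {y \<in> topspace X. g y \<in> V}. f y \<in> V" using U(4) by auto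
  ultimately show "\<exists>U. openin X U \<and> x \<in> U \<and> (\<forall>y\<in>U. f y \<in> V)" by blast
qed

lemma continuous_map_real_series:
  fixes g :: "nat \<Rightarrow> 'b \<Rightarrow> real"
  assumes cont: "\<And>k. continuous_map X euclideanreal (g k)"
    and bd: "\<And>k x. \<bar>g k x\<bar> \<le> b k" and sb: "summable b"
  shows "continuous_map X euclideanreal (\<lambda>x. \<Sum>k. g k x)"
proof -
  have sg: "summable (\<lambda>k. g k x)" for x
    by (rule summable_comparison_test[OF _ sb]) (simp add: bd)
  have "continuous_map X Met_TC.mtopology (\<lambda>x. \<Sum>k. g k x)"
  proof (rule Met_TC.continuous_map_uniform_limit[where F=sequentially and f="\<lambda>n x. \<Sum>k<n. g k x"])
    have "continuous_map X euclideanreal (\<lambda>x. \<Sum>k<n. g k x)" for n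
      using cont by (simp add: continuous_map_sum)
    then show "\<forall>\<^sub>F n in sequentially. continuous_map X Met_TC.mtopology (\<lambda>x. \<Sum>k<n. g k x)"
      by simp
  next
    fix e :: real assume e: "0 < e"
    have "(\<lambda>n. \<Sum>k. b (k + n)) \<longlonglongrightarrow> 0"
      by (rule suminf_exist_split2[OF sb])
    then obtain N where N: "\<And>n. n \<ge> N \<Longrightarrow> norm (\<Sum>k. b (k + n)) < e"
      using e unfolding LIMSEQ_iff by fastforce
    show "\<forall>\<^sub>F n in sequentially. \<forall>x\<in>topspace X. (\<Sum>k. g k x) \<in> UNIV \<and> dist (\<Sum>k<n. g k x) (\<Sum>k. g k x) < e"
    proof (rule eventually_sequentiallyI[of N], intro ballI conjI)
      fix n x assume n: "N \<le> n"
      have eq: "(\<Sum>k. g k x) - (\<Sum>k<n. g k x) = (\<Sum>k. g (k + n) x)"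
        using suminf_split_initial_segment[OF sg[of x], of n] by simp
      have sb': "summable (\<lambda>k. b (k + n))" using sb by (simp add: summable_iff_shift)
      have sa: "summable (\<lambda>k. \<bar>g (k + n) x\<bar>)"
        by (rule summable_comparison_test[OF _ sb']) (simp add: bd)
      have "\<bar>\<Sum>k. g (k + n) x\<bar> \<le> (\<Sum>k. \<bar>g (k + n) x\<bar>)"
        by (rule summable_rabs[OF sa])
      also have "\<dots> \<le> (\<Sum>k. b (k + n))"
        by (rule suminf_le[OF _ sa sb']) (simp add: bd)
      finally have "\<bar>\<Sum>k. g (k + n) x\<bar> < e" using N[OF n] by simp
      then show "dist (\<Sum>k<n. g k x) (\<Sum>k. g k x) < e"
        using eq by (simp add: dist_real_def abs_minus_commute)
    qed simp
  qed simp
  then show ?thesis by simp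
qed

lemma tvs_add:
  assumes "tvs E" "continuous_map X E g" "continuous_map X E h"
  shows "continuous_map X E (\<lambda>x. g x + h x)"
proof -
  have "continuous_map X (prod_topology E E) (\<lambda>x. (g x, h x))"
    using assms by (simp add: continuous_map_paired)
  moreover have "continuous_map (prod_topology E E) E (\<lambda>(x, y). x + y)"
    using assms(1) by (simp add: tvs_def)
  ultimately have "continuous_map X E ((\<lambda>(x, y). x + y) \<circ> (\<lambda>x. (g x, h x)))"
    by (rule continuous_map_compose)
  then show ?thesis by (simp add: o_def)
qed

lemma tvs_scale:
  assumes "tvs E" "continuous_map X euclideanreal c" "continuous_map X E g"
  shows "continuous_map X E (\<lambda>x. c x *\<^sub>R g x)"
proof -
  have "continuous_map X (prod_topology euclideanreal E) (\<lambda>x. (c x, g x))"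
    using assms by (simp add: continuous_map_paired)
  moreover have "continuous_map (prod_topology euclideanreal E) E (\<lambda>(c, x). c *\<^sub>R x)"
    using assms(1) by (simp add: tvs_def)
  ultimately have "continuous_map X E ((\<lambda>(c, x). c *\<^sub>R x) \<circ> (\<lambda>x. (c x, g x)))"
    by (rule continuous_map_compose)
  then show ?thesis by (simp add: o_def)
qed

lemma tvs_const: "tvs E \<Longrightarrow> continuous_map X E (\<lambda>x. v)"
  by (simp add: tvs_def)

lemma tvs_sum_scale:
  fixes N :: nat
  assumes "tvs E" "\<And>m. continuous_map X euclideanreal (a m)"
  shows "continuous_map X E (\<lambda>x. \<Sum>m<N. a m x *\<^sub>R v m)"
proof (induction N)
  case 0
  then show ?case using tvs_const[OF assms(1)] by simp
next
  case (Suc N)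
  have "continuous_map X E (\<lambda>x. (\<Sum>m<N. a m x *\<^sub>R v m) + a N x *\<^sub>R v N)"
    by (rule tvs_add[OF assms(1) Suc tvs_scale[OF assms(1) assms(2) tvs_const[OF assms(1)]]])
  then show ?case by simp
qed

definition gN :: "real \<Rightarrow> real" where "gN t = min 1 (infdist t \<nat>)"
definition rnd :: "real \<Rightarrow> nat" where "rnd t = nat \<lfloor>t + 1/2\<rfloor>"

lemma gN_nonneg: "0 \<le> gN t" by (simp add: gN_def infdist_nonneg)
lemma gN_le1: "gN t \<le> 1" by (simp add: gN_def)

lemma gN_cont: "continuous_map X euclideanreal h \<Longrightarrow> continuous_map X euclideanreal (\<lambda>x. gN (h x))"
proof -
  assume h: "continuous_map X euclideanreal h"
  have "continuous_on UNIV (\<lambda>t::real. infdist t \<nat>)"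
    by (intro continuous_on_infdist continuous_on_id)
  then have "continuous_map euclideanreal euclideanreal gN"
    unfolding gN_def by (auto intro!: continuous_intros)
  from continuous_map_compose[OF h this] show ?thesis by (simp add: o_def)
qed

lemma gN_nat [simp]: "gN (real n) = 0"
  by (simp add: gN_def)

lemma gN_zero: "gN t = 0 \<Longrightarrow> \<exists>n. t = real n"
proof -
  assume "gN t = 0"
  then have "infdist t \<nat> = 0" by (simp add: gN_def min_def split: if_splits)
  then have "t \<in> closure \<nat>" using in_closure_iff_infdist_zero[of "\<nat>" t] by auto
  then have "t \<in> \<nat>" by simp
  then show ?thesis by (auto elim: Nats_cases)
qed

lemma gN_small: assumes "gN t < 1/4" shows "\<exists>n. \<bar>t - real n\<bar> < 1/4"
proof -
  have "infdist t \<nat> < 1/4" using assms by (simp add: gN_def min_def split: if_splits)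
  then have "(INF a\<in>\<nat>. dist t a) < 1/4" by (simp add: infdist_notempty)
  then obtain a where "a \<in> \<nat>" "dist t a < 1/4"
    by (subst (asm) cINF_less_iff) (auto intro: bdd_belowI2[where m=0])
  then show ?thesis by (auto elim!: Nats_cases simp: dist_real_def)
qed

lemma rnd_eq: "\<bar>t - real n\<bar> < 1/2 \<Longrightarrow> rnd t = n"
proof -
  assume "\<bar>t - real n\<bar> < 1/2"
  then have "real n \<le> t + 1/2" "t + 1/2 < real n + 1" by linarith+
  then have "\<lfloor>t + 1/2\<rfloor> = int n" by (subst floor_eq_iff) auto
  then show ?thesis by (simp add: rnd_def)
qed

lemma rnd_nat [simp]: "rnd (real n) = n" by (rule rnd_eq) simp

definition mu :: "(nat \<Rightarrow> real) \<Rightarrow> real" where "mu s = (\<Sum>i. gN (s i) / 2^i)"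

lemma mu_summable: "summable (\<lambda>i. gN (s i) / 2^i)"
proof (rule summable_comparison_test[OF _ summable_geometric[of "1/2"]])
  show "\<exists>N. \<forall>n\<ge>N. norm (gN (s n) / 2 ^ n) \<le> (1/2) ^ n"
    using gN_nonneg gN_le1 by (auto simp: power_one_over divide_right_mono)
qed simp

lemma mu_nonneg: "0 \<le> mu s"
  unfolding mu_def by (rule suminf_nonneg[OF mu_summable]) (simp add: gN_nonneg)

lemma mu_ge: "gN (s i) / 2^i \<le> mu s"
  unfolding mu_def
  using sum_le_suminf[OF mu_summable, of "{i}"] gN_nonneg by simp

lemma mu_ge': "gN (s i) \<le> 2^i * mu s"
  using mu_ge[of s i] by (simp add: field_simps)

lemma mu_zero: "mu s = 0 \<Longrightarrow> gN (s i) = 0"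
  using mu_ge[of s i] gN_nonneg[of "s i"] by (simp add: divide_le_0_iff) (metis not_le zero_less_power zero_less_numeral)

lemma mu_nat [simp]: "mu (\<lambda>i. real (a i)) = 0"
  by (simp add: mu_def)

lemma mu_cont: "continuous_map (powertop_real UNIV) euclideanreal mu"
  unfolding mu_def
proof (rule continuous_map_real_series[where b="\<lambda>i. (1/2)^i"])
  fix k
  show "continuous_map (powertop_real UNIV) euclideanreal (\<lambda>x. gN (x k) / 2 ^ k)"
    by (intro continuous_intros gN_cont continuous_map_product_projection) auto
next
  fix k x
  show "\<bar>gN (x k) / 2 ^ k\<bar> \<le> (1 / 2) ^ k"
    using gN_nonneg gN_le1 by (auto simp: power_one_over divide_right_mono)
qed simp

definition qf :: "nat \<Rightarrow> real \<Rightarrow> real" where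
  "qf m t = (if m = 0 then 1 else max 0 (min 1 (2 - 2^(m+4) * t)))"
definition hf :: "nat \<Rightarrow> real \<Rightarrow> real" where "hf m t = qf m t - qf (Suc m) t"
definition Bd :: "real \<Rightarrow> nat" where "Bd t = nat \<lceil>1/t\<rceil> + 1"

lemma qf_range: "0 \<le> qf m t" "qf m t \<le> 1" by (auto simp: qf_def)

lemma qf_mono: assumes "0 \<le> t" shows "qf (Suc m) t \<le> qf m t"
proof (cases "m = 0")
  case True then show ?thesis by (simp add: qf_def)
next
  case False
  have "(2::real)^(m+4) * t \<le> 2^(Suc m+4) * t" using assms by (intro mult_right_mono) auto
  then show ?thesis using False by (simp add: qf_def)
qed

lemma hf_nonneg: "0 \<le> t \<Longrightarrow> 0 \<le> hf m t"
  using qf_mono[of t m] by (simp add: hf_def)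

lemma hf_small: assumes "0 \<le> t" "0 < m" "hf m t \<noteq> 0" shows "t < 1/2^(m+3)"
proof -
  have "qf m t > 0" using assms qf_mono[of t m] qf_range[of "Suc m" t] by (simp add: hf_def)
  then have "2^(m+4) * t < 2" using assms(2) by (auto simp: qf_def)
  then have "t < 2 / 2^(m+4)" by (simp add: field_simps)
  also have "2 / 2^(m+4) = (1::real)/2^(m+3)" by (simp add: field_simps power_add)
  finally show ?thesis .
qed

lemma hf_large: assumes "0 \<le> t" "hf m t \<noteq> 0" shows "1/2^(m+5) < t"
proof -
  have "qf (Suc m) t < 1" using assms qf_mono[of t m] qf_range[of m t] by (simp add: hf_def)
  then have "2 - 2^(m+5) * t < 1" unfolding qf_def by (simp add: min_def add.commute split: if_splits)
  then have "1 < 2^(m+5) * t" by simp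
  then show "1 / 2^(m+5) < t" by (simp add: field_simps)
qed

lemma hf_sum: "(\<Sum>m<N. hf m t) = 1 - qf N t"
  unfolding hf_def by (subst sum_lessThan_telescope') (simp add: qf_def)

lemma hf_zero_large: assumes "0 \<le> t" "0 < N" "1/2^(N+3) \<le> t" "N \<le> m" shows "hf m t = 0"
proof (rule ccontr)
  assume "hf m t \<noteq> 0"
  then have "t < 1/2^(m+3)" using hf_small[of t m] assms by auto
  also have "(1::real)/2^(m+3) \<le> 1/2^(N+3)" using assms(4) by (simp add: field_simps)
  finally show False using assms(3) by simp
qed

lemma Bd_pos: "0 < Bd t" by (simp add: Bd_def)

lemma Bd_prop: assumes "0 < t" shows "1/2^(Bd t + 3) \<le> t"
proof -
  have "1/t \<le> real (nat \<lceil>1/t\<rceil>)" by linarith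
  also have "\<dots> < real (Bd t)" by (simp add: Bd_def)
  also have "\<dots> < 2 ^ Bd t" by (metis of_nat_less_numeral_power_cancel_iff less_exp)
  finally have "1 < 2 ^ Bd t * t" using assms by (simp add: field_simps)
  then have "1 \<le> 2^(Bd t + 3) * t" using assms by (simp add: power_add) 
  then show ?thesis using assms by (simp add: field_simps)
qed

lemma qf_zero: assumes "0 < N" "1/2^(N+3) \<le> t" shows "qf N t = 0"
proof -
  have "1 \<le> 2^(N+3) * t" using assms(2) by (simp add: field_simps)
  then have "2 \<le> 2^(N+4) * t" by (simp add: power_add algebra_simps)
  then show ?thesis using assms(1) by (simp add: qf_def)
qed

lemma hf_cont: "continuous_map X euclideanreal h \<Longrightarrow> continuous_map X euclideanreal (\<lambda>x. hf m (h x))"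
  unfolding hf_def qf_def by (auto intro!: continuous_intros)

lemma sum_stable:
  fixes F :: "nat \<Rightarrow> 'b::comm_monoid_add"
  assumes "\<And>m. N1 \<le> m \<Longrightarrow> F m = 0" "\<And>m. N2 \<le> m \<Longrightarrow> F m = 0"
  shows "sum F {..<N1} = sum F {..<N2}"
proof -
  have "sum F {..<max N1 N2} = sum F {..<N1}"
    by (rule sum.mono_neutral_right) (use assms(1) in auto)
  moreover have "sum F {..<max N1 N2} = sum F {..<N2}"
    by (rule sum.mono_neutral_right) (use assms(2) in auto)
  ultimately show ?thesis by simp
qed

section \<open>The extension map\<close>

definition Rm :: "nat \<Rightarrow> (nat \<Rightarrow> real) \<Rightarrow> nat \<Rightarrow> nat" where
  "Rm m s = (\<lambda>i. if i < m then rnd (s i) else 0)"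

definition Phi :: "((nat \<Rightarrow> nat) \<Rightarrow> 'a::real_vector) \<Rightarrow> (nat \<Rightarrow> real) \<Rightarrow> 'a" where
  "Phi f s = (if mu s = 0 then f (\<lambda>i. rnd (s i))
              else (\<Sum>m<Bd (mu s). hf m (mu s) *\<^sub>R f (Rm m s)))"

lemma Phi_nat: "Phi f (\<lambda>i. real (a i)) = f a"
  by (simp add: Phi_def)

lemma topspace_baire [simp]: "topspace baire_space = UNIV"
  by (simp add: baire_space_def)

lemma baire_cyl:
  assumes "openin baire_space W" "a \<in> W"
  obtains K where "\<And>b. (\<forall>i<K. b i = a i) \<Longrightarrow> b \<in> W"
proof -
  obtain U where U: "finite {i. U i \<noteq> UNIV}" "a \<in> Pi\<^sub>E UNIV U" "Pi\<^sub>E UNIV U \<subseteq> W"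
    using assms unfolding baire_space_def openin_product_topology_alt by fastforce
  obtain K where K: "{i. U i \<noteq> UNIV} \<subseteq> {..<K}" using U(1) finite_nat_bounded by blast
  show ?thesis
  proof
    fix b :: "nat \<Rightarrow> nat" assume b: "\<forall>i<K. b i = a i"
    have "b \<in> Pi\<^sub>E UNIV U"
    proof (clarsimp simp: PiE_def Pi_def)
      fix i show "b i \<in> U i"
      proof (cases "i < K")
        case True then show ?thesis using b U(2) by (auto simp: PiE_def)
      next
        case False then have "U i = UNIV" using K by auto
        then show ?thesis by simp
      qed
    qed
    then show "b \<in> W" using U(3) by blast
  qed
qed

lemma openin_nat_conj:
  fixes N :: nat
  assumes "openin X {x \<in> topspace X. P x}" "\<And>i. i < N \<Longrightarrow> openin X {x \<in> topspace X. Q i x}"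
  shows "openin X {x \<in> topspace X. P x \<and> (\<forall>i<N. Q i x)}"
  using assms(2)
proof (induction N)
  case 0 then show ?case using assms(1) by simp
next
  case (Suc N)
  have "{x \<in> topspace X. P x \<and> (\<forall>i<Suc N. Q i x)} =
        {x \<in> topspace X. P x \<and> (\<forall>i<N. Q i x)} \<inter> {x \<in> topspace X. Q N x}"
    by (auto simp: less_Suc_eq)
  then show ?case using Suc by (metis (no_types, lifting) lessI less_SucI openin_Int)
qed

lemma openin_less: "continuous_map X euclideanreal h \<Longrightarrow> openin X {x \<in> topspace X. h x < c}"
  using openin_continuous_map_preimage[of X euclideanreal h "{..<c}"] by simp

lemma openin_greater: "continuous_map X euclideanreal h \<Longrightarrow> openin X {x \<in> topspace X. c < h x}"
  using openin_continuous_map_preimage[of X euclideanreal h "{c<..}"] by simp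

lemma topspace_RN [simp]: "topspace (powertop_real UNIV) = UNIV"
  by simp

lemma proj_cont: "continuous_map (powertop_real UNIV) euclideanreal (\<lambda>s. s i)"
  by (rule continuous_map_product_projection) simp

lemma Phi_cont:
  assumes E: "tvs E"
    and lc: "\<And>x U. openin E U \<Longrightarrow> x \<in> U \<Longrightarrow> \<exists>V. openin E V \<and> convex V \<and> x \<in> V \<and> V \<subseteq> U"
    and f: "continuous_map baire_space E f"
  shows "continuous_map (powertop_real UNIV) E (Phi f)"
proof (rule continuous_map_pointwise)
  fix s0 show "Phi f s0 \<in> topspace E" using E by (simp add: tvs_def)
next
  fix s0 V assume V: "openin E V" "Phi f s0 \<in> V"
  show "\<exists>U. openin (powertop_real UNIV) U \<and> s0 \<in> U \<and> (\<forall>y\<in>U. Phi f y \<in> V)"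
  proof (cases "mu s0 = 0")
    case True
    define a0 where "a0 = (\<lambda>i. rnd (s0 i))"
    have s0a: "s0 i = real (a0 i)" for i
    proof -
      obtain n where "s0 i = real n" using gN_zero[OF mu_zero[OF True]] by blast
      then show ?thesis by (simp add: a0_def)
    qed
    have "f a0 \<in> V" using V True by (simp add: Phi_def a0_def)
    obtain V' where V': "openin E V'" "convex V'" "f a0 \<in> V'" "V' \<subseteq> V"
      using lc[OF V(1) \<open>f a0 \<in> V\<close>] by blast
    have "openin baire_space {b \<in> topspace baire_space. f b \<in> V'}"
      using f V'(1) by (rule openin_continuous_map_preimage)
    moreover have "a0 \<in> {b \<in> topspace baire_space. f b \<in> V'}" using V'(3) by simp
    ultimately obtain K where K: "\<And>b. (\<forall>i<K. b i = a0 i) \<Longrightarrow> f b \<in> V'"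
      by (rule baire_cyl) auto
    define U where "U = {s \<in> topspace (powertop_real UNIV). mu s < 1/2^(K+5) \<and> (\<forall>i<K. \<bar>s i - s0 i\<bar> < 1/4)}"
    have "openin (powertop_real UNIV) U"
      unfolding U_def
    proof (rule openin_nat_conj)
      show "openin (powertop_real UNIV) {x \<in> topspace (powertop_real UNIV). mu x < 1 / 2 ^ (K + 5)}"
        by (rule openin_less[OF mu_cont])
      fix i
      show "openin (powertop_real UNIV) {x \<in> topspace (powertop_real UNIV). \<bar>x i - s0 i\<bar> < 1 / 4}"
        by (rule openin_less) (intro continuous_intros proj_cont)
    qed
    moreover have "s0 \<in> U" using True by (simp add: U_def)
    moreover have "Phi f s \<in> V" if "s \<in> U" for s
    proof -
      have sU: "mu s < 1/2^(K+5)" "\<And>i. i < K \<Longrightarrow> \<bar>s i - s0 i\<bar> < 1/4" using that by (auto simp: U_def)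
      have rs: "rnd (s i) = a0 i" if "i < K" for i
        by (rule rnd_eq) (use sU(2)[OF that] s0a[of i] in auto)
      show ?thesis
      proof (cases "mu s = 0")
        case True
        then have "Phi f s = f (\<lambda>i. rnd (s i))" by (simp add: Phi_def)
        also have "\<dots> \<in> V'" by (rule K) (simp add: rs)
        finally show ?thesis using V'(4) by blast
      next
        case False
        have mpos: "0 < mu s" using False mu_nonneg[of s] by simp
        define y where "y m = (if hf m (mu s) = 0 then f a0 else f (Rm m s))" for m
        have "Phi f s = (\<Sum>m<Bd (mu s). hf m (mu s) *\<^sub>R f (Rm m s))" using False by (simp add: Phi_def)
        also have "\<dots> = (\<Sum>m<Bd (mu s). hf m (mu s) *\<^sub>R y m)"
          by (rule sum.cong) (auto simp: y_def)
        also have "\<dots> \<in> V'"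
        proof (rule convex_sum)
          show "finite {..<Bd (mu s)}" by simp
          show "convex V'" by (rule V'(2))
          show "(\<Sum>i<Bd (mu s). hf i (mu s)) = 1"
            using qf_zero[OF Bd_pos Bd_prop[OF mpos]] by (simp add: hf_sum)
          show "0 \<le> hf i (mu s)" for i using mu_nonneg by (rule hf_nonneg)
          fix m
          show "y m \<in> V'"
          proof (cases "hf m (mu s) = 0")
            case True then show ?thesis using V'(3) by (simp add: y_def)
          next
            case False
            have "1/2^(m+5) < mu s" using hf_large[OF mu_nonneg False] .
            then have "(1::real)/2^(m+5) < 1/2^(K+5)" using sU(1) by linarith
            then have "K < m" by (simp add: field_simps)
            then have "f (Rm m s) \<in> V'" by (intro K) (simp add: Rm_def rs)
            then show ?thesis using False by (simp add: y_def)
          qed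
        qed
        finally show ?thesis using V'(4) by blast
      qed
    qed
    ultimately show ?thesis by blast
  next
    case False
    define t0 where "t0 = mu s0"
    have t0: "0 < t0" using False mu_nonneg[of s0] by (simp add: t0_def)
    define N where "N = Bd (t0/2)"
    have N: "0 < N" "1/2^(N+3) \<le> t0/2" using Bd_pos Bd_prop[of "t0/2"] t0 by (auto simp: N_def)
    define ty where "ty i = (gN (s0 i) < 1/4)" for i
    define Q where "Q i s = (if ty i then \<bar>s i - real (rnd (s0 i))\<bar> < 1/4 else 1/8 < gN (s i))" for i s
    define G where "G s = (\<Sum>m<N. hf m (mu s) *\<^sub>R f (Rm m s0))" for s
    have Gc: "continuous_map (powertop_real UNIV) E G"
      unfolding G_def by (rule tvs_sum_scale[OF E hf_cont[OF mu_cont]])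
    define U where "U = {s \<in> topspace (powertop_real UNIV). t0/2 < mu s \<and> (\<forall>i<N. Q i s)}"
    have Uo: "openin (powertop_real UNIV) U"
      unfolding U_def
    proof (rule openin_nat_conj)
      show "openin (powertop_real UNIV) {x \<in> topspace (powertop_real UNIV). t0/2 < mu x}"
        by (rule openin_greater[OF mu_cont])
      fix i
      show "openin (powertop_real UNIV) {x \<in> topspace (powertop_real UNIV). Q i x}"
      proof (cases "ty i")
        case True
        then show ?thesis unfolding Q_def
          by (simp only: if_True) (rule openin_less, intro continuous_intros proj_cont)
      next
        case False
        then show ?thesis unfolding Q_def
          by (simp only: if_False) (rule openin_greater, rule gN_cont[OF proj_cont])
      qed
    qed
    have s0U: "s0 \<in> U"
    proof -
      have "Q i s0" for i
      proof (cases "ty i")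
        case True
        then obtain n where n: "\<bar>s0 i - real n\<bar> < 1/4" using gN_small by (auto simp: ty_def)
        then have "rnd (s0 i) = n" by (intro rnd_eq) auto
        then show ?thesis using True n by (simp add: Q_def)
      next
        case False then show ?thesis by (simp add: Q_def ty_def)
      qed
      then show ?thesis using t0 by (simp add: U_def t0_def)
    qed
    have PG: "Phi f s = G s" if "s \<in> U" for s
    proof -
      have sU: "t0/2 < mu s" "\<And>i. i < N \<Longrightarrow> Q i s" using that by (auto simp: U_def)
      have mpos: "0 < mu s" using sU(1) t0 by linarith
      have "Phi f s = (\<Sum>m<Bd (mu s). hf m (mu s) *\<^sub>R f (Rm m s))" using mpos by (simp add: Phi_def)
      also have "\<dots> = (\<Sum>m<N. hf m (mu s) *\<^sub>R f (Rm m s))"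
      proof (rule sum_stable)
        fix m assume "Bd (mu s) \<le> m"
        then show "hf m (mu s) *\<^sub>R f (Rm m s) = 0"
          using hf_zero_large[OF mu_nonneg Bd_pos Bd_prop[OF mpos]] by simp
      next
        fix m assume "N \<le> m"
        then show "hf m (mu s) *\<^sub>R f (Rm m s) = 0"
          using hf_zero_large[OF mu_nonneg N(1), of s m] N(2) sU(1) by simp
      qed
      also have "\<dots> = G s"
        unfolding G_def
      proof (rule sum.cong[OF refl])
        fix m assume m: "m \<in> {..<N}"
        show "hf m (mu s) *\<^sub>R f (Rm m s) = hf m (mu s) *\<^sub>R f (Rm m s0)"
        proof (cases "hf m (mu s) = 0")
          case True then show ?thesis by simp
        next
          case False
          have "Rm m s = Rm m s0"
          proof
            fix i show "Rm m s i = Rm m s0 i"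
            proof (cases "i < m")
              case im: True
              then have "0 < m" by simp
              have ms: "mu s < 1/2^(m+3)" using hf_small[OF mu_nonneg \<open>0 < m\<close> False] .
              have "gN (s i) \<le> 2^i * mu s" by (rule mu_ge')
              also have "\<dots> \<le> 2^i * (1/2^(m+3))" using ms by (intro mult_left_mono) auto
              also have "\<dots> \<le> 1/8"
              proof -
                have "(2::real)^i * 8 \<le> 2^(m+3)"
                proof -
                  have "(2::real)^(i+3) \<le> 2^(m+3)" by (rule power_increasing) (use im in auto)
                  then show ?thesis by (simp add: power_add)
                qed
                then show ?thesis by (simp add: field_simps)
              qed
              finally have g8: "gN (s i) \<le> 1/8" .
              have "i < N" using im m by simp
              then have "Q i s" by (rule sU(2))
              then have "ty i" using g8 by (auto simp: Q_def split: if_splits)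
              then have q: "\<bar>s i - real (rnd (s0 i))\<bar> < 1/4" using \<open>Q i s\<close> by (simp add: Q_def)
              then have "rnd (s i) = rnd (s0 i)" by (intro rnd_eq) auto
              then show ?thesis by (simp add: Rm_def)
            next
              case False then show ?thesis by (simp add: Rm_def)
            qed
          qed
          then show ?thesis by simp
        qed
      qed
      finally show ?thesis .
    qed
    have "openin (powertop_real UNIV) {s \<in> topspace (powertop_real UNIV). G s \<in> V}"
      using Gc V(1) by (rule openin_continuous_map_preimage)
    then have "openin (powertop_real UNIV) (U \<inter> {s \<in> topspace (powertop_real UNIV). G s \<in> V})"
      using Uo by (rule openin_Int[rotated])
    moreover have "s0 \<in> U \<inter> {s \<in> topspace (powertop_real UNIV). G s \<in> V}"
      using s0U PG[OF s0U] V(2) by simp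
    moreover have "\<forall>y\<in>U \<inter> {s \<in> topspace (powertop_real UNIV). G s \<in> V}. Phi f y \<in> V"
      using PG by auto
    ultimately show ?thesis by blast
  qed
qed

definition cs :: "nat \<Rightarrow> real" where "cs n = 1 / (real n + 1)"

lemma cs_pos: "0 < cs n" by (simp add: cs_def)
lemma cs_ne0 [simp]: "cs n \<noteq> 0" using cs_pos[of n] by simp
lemma cs_inj [simp]: "cs m = cs n \<longleftrightarrow> m = n" by (auto simp: cs_def)
lemma cs_less_iff: "cs m < cs n \<longleftrightarrow> n < m" by (auto simp: cs_def field_simps)
lemma cs_floor: "nat \<lfloor>1 / cs n\<rfloor> - 1 = n" by (simp add: cs_def)

lemma conv_seq_iff: "x \<in> conv_seq \<longleftrightarrow> x = 0 \<or> (\<exists>n. x = cs n)"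
proof
  assume "x \<in> conv_seq"
  then consider "x = 0" | n where "n \<ge> 1" "x = 1 / real n" by (auto simp: conv_seq_def)
  then show "x = 0 \<or> (\<exists>n. x = cs n)"
  proof cases
    case 2
    then have "x = cs (n - 1)" by (simp add: cs_def of_nat_diff)
    then show ?thesis by blast
  qed simp
next
  assume "x = 0 \<or> (\<exists>n. x = cs n)"
  then show "x \<in> conv_seq"
  proof
    assume "\<exists>n. x = cs n"
    then obtain n where "x = cs n" by blast
    then have "x = 1 / real (Suc n)" "Suc n \<ge> 1" by (auto simp: cs_def add.commute)
    then show ?thesis unfolding conv_seq_def by blast
  qed (simp add: conv_seq_def)
qed

lemma zero_in_conv [simp]: "0 \<in> conv_seq" by (simp add: conv_seq_iff)
lemma cs_in_conv [simp]: "cs n \<in> conv_seq" by (auto simp: conv_seq_iff)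

lemma countable_conv: "countable conv_seq"
proof -
  have eq: "conv_seq = insert 0 (range cs)" by (auto simp: conv_seq_iff)
  have "countable (insert 0 (range cs))" by simp
  then show ?thesis by (simp only: eq)
qed

lemma cs_tendsto: "cs \<longlonglongrightarrow> 0"
  using LIMSEQ_inverse_real_of_nat by (simp add: cs_def[abs_def] inverse_eq_divide add.commute)

lemma cs_gap: assumes "n \<noteq> k" shows "cs k - cs (Suc k) \<le> \<bar>cs n - cs k\<bar>"
proof (cases "k < n")
  case True
  then have "cs n \<le> cs (Suc k)" using cs_less_iff[of n "Suc k"] by (cases "n = Suc k") auto
  then show ?thesis by simp
next
  case False
  then have nk: "n < k" using assms by simp
  then obtain k' where k: "k = Suc k'" by (cases k) auto
  have "cs k' \<le> cs n" using nk k cs_less_iff[of k' n] by (cases "n = k'") auto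
  moreover have "cs k - cs (Suc k) \<le> cs k' - cs k"
  proof -
    have a: "cs k - cs (Suc k) = 1/((real k' + 2) * (real k' + 3))" unfolding k cs_def by (simp add: field_simps)
    have b: "cs k' - cs k = 1/((real k' + 1) * (real k' + 2))" unfolding k cs_def by (simp add: field_simps)
    have "1/((real k' + 2) * (real k' + 3)) \<le> 1/((real k' + 1) * (real k' + 2))"
    proof (rule divide_left_mono)
      show "(real k' + 1) * (real k' + 2) \<le> (real k' + 2) * (real k' + 3)"
        by (intro mult_mono) auto
      show "0 < (real k' + 2) * (real k' + 3) * ((real k' + 1) * (real k' + 2))"
        by (intro mult_pos_pos) auto
    qed simp
    then show ?thesis using a b by simp
  qed
  ultimately show ?thesis by simp
qed

lemma conv_cont_iff:
  fixes g :: "real \<Rightarrow> real"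
  shows "continuous_on conv_seq g \<longleftrightarrow> (\<lambda>n. g (cs n)) \<longlonglongrightarrow> g 0"
proof
  assume "continuous_on conv_seq g"
  then show "(\<lambda>n. g (cs n)) \<longlonglongrightarrow> g 0"
    unfolding continuous_on_sequentially using cs_tendsto by (auto simp: o_def)
next
  assume L: "(\<lambda>n. g (cs n)) \<longlonglongrightarrow> g 0"
  show "continuous_on conv_seq g"
  proof (rule Elementary_Metric_Spaces.continuous_on_iff[THEN iffD2], intro ballI allI impI)
    fix x e :: real assume x: "x \<in> conv_seq" and e: "0 < e"
    show "\<exists>d>0. \<forall>x'\<in>conv_seq. dist x' x < d \<longrightarrow> dist (g x') (g x) < e"
    proof (cases "x = 0")
      case True
      obtain M where M: "\<And>n. n \<ge> M \<Longrightarrow> dist (g (cs n)) (g 0) < e"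
        using L e unfolding LIMSEQ_def by blast
      show ?thesis
      proof (intro exI conjI ballI impI)
        show "0 < cs M" by (rule cs_pos)
        fix x' assume x': "x' \<in> conv_seq" "dist x' x < cs M"
        show "dist (g x') (g x) < e"
        proof (cases "x' = 0")
          case False
          then obtain n where n: "x' = cs n" using x' conv_seq_iff by blast
          then have "cs n < cs M" using x' True cs_pos[of n] by (simp add: dist_real_def)
          then have "M \<le> n" using cs_less_iff by (simp add: less_imp_le)
          then show ?thesis using M n True by simp
        qed (use True e in simp)
      qed
    next
      case False
      then obtain k where k: "x = cs k" using x conv_seq_iff by blast
      show ?thesis
      proof (intro exI conjI ballI impI)
        show "0 < cs k - cs (Suc k)" using cs_less_iff[of "Suc k" k] by simp
        fix x' assume x': "x' \<in> conv_seq" "dist x' x < cs k - cs (Suc k)"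
        have "x' = x"
        proof (cases "x' = 0")
          case True
          then show ?thesis using x' k cs_pos[of "Suc k"] cs_pos[of k] by (simp add: dist_real_def)
        next
          case False
          then obtain n where n: "x' = cs n" using x' conv_seq_iff by blast
          show ?thesis
          proof (rule ccontr)
            assume "x' \<noteq> x"
            then have "n \<noteq> k" using n k by simp
            then show False using cs_gap[of n k] x' n k by (simp add: dist_real_def)
          qed
        qed
        then show "dist (g x') (g x) < e" using e by simp
      qed
    qed
  qed
qed

abbreviation "CS \<equiv> Cp conv_seq"

lemma topspace_CS: "topspace CS = {f \<in> extensional conv_seq. continuous_on conv_seq f}"
  by (auto simp: Cp_def topspace_subtopology PiE_def)

lemma in_CS: "f \<in> topspace CS \<longleftrightarrow> f \<in> extensional conv_seq \<and> (\<lambda>n. f (cs n)) \<longlonglongrightarrow> f 0"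
  by (simp add: topspace_CS conv_cont_iff)

lemma CS_proj: "x \<in> conv_seq \<Longrightarrow> continuous_map CS euclideanreal (\<lambda>f. f x)"
  unfolding Cp_def
  by (rule continuous_map_from_subtopology) (rule continuous_map_product_projection)

lemma normal_CS: "normal_space CS"
proof -
  have "metrizable_space (powertop_real conv_seq)"
    using countable_conv metrizable_space_euclidean
    by (auto simp: metrizable_space_product_topology intro: countable_subset)
  then have "metrizable_space CS" unfolding Cp_def by (rule metrizable_space_subtopology)
  then show ?thesis by (rule metrizable_imp_normal_space)
qed

section \<open>A closed copy of the Baire space in Cp(S)\<close>

definition pt :: "nat \<Rightarrow> nat \<Rightarrow> real" where "pt i j = cs (prod_encode (i, j))"
definition wt :: "nat \<Rightarrow> real" where "wt i = 1 / (real i + 1)"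

lemma wt_pos: "0 < wt i" by (simp add: wt_def)
lemma pt_in [simp]: "pt i j \<in> conv_seq" by (simp add: pt_def)

definition Aset :: "(real \<Rightarrow> real) set" where
  "Aset = {\<phi> \<in> topspace CS. \<phi> 0 = 0 \<and> (\<forall>i j. \<phi> (pt i j) = 0 \<or> \<phi> (pt i j) = wt i)
            \<and> (\<forall>i j. \<phi> (pt i (Suc j)) \<le> \<phi> (pt i j))}"

lemma Aset_sub: "Aset \<subseteq> topspace CS" by (auto simp: Aset_def)

lemma closedin_Aset: "closedin CS Aset"
proof -
  define C where "C k = (case k of (i, j) \<Rightarrow>
      {\<phi> \<in> topspace CS. \<phi> 0 \<in> {0}} \<inter> {\<phi> \<in> topspace CS. \<phi> (pt i j) \<in> {0, wt i}}
      \<inter> {\<phi> \<in> topspace CS. \<phi> (pt i (Suc j)) - \<phi> (pt i j) \<in> {..0}})" for k :: "nat \<times> nat"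
  have "closedin CS (C k)" for k
  proof -
    obtain i j where k: "k = (i, j)" by fastforce
    have c1: "closedin CS {\<phi> \<in> topspace CS. \<phi> 0 \<in> {0}}"
      by (rule closedin_continuous_map_preimage[OF CS_proj]) auto
    have c2: "closedin CS {\<phi> \<in> topspace CS. \<phi> (pt i j) \<in> {0, wt i}}"
      by (rule closedin_continuous_map_preimage[OF CS_proj]) auto
    have c3: "closedin CS {\<phi> \<in> topspace CS. \<phi> (pt i (Suc j)) - \<phi> (pt i j) \<in> {..0}}"
      by (rule closedin_continuous_map_preimage) (auto intro!: continuous_map_diff CS_proj)
    show ?thesis unfolding C_def k using c1 c2 c3 by (simp add: closedin_Int)
  qed
  then have "closedin CS (\<Inter>k\<in>UNIV. C k)" by (intro closedin_INT) auto
  moreover have "(\<Inter>k\<in>UNIV. C k) = Aset"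
  proof (intro equalityI subsetI)
    fix \<phi> assume "\<phi> \<in> (\<Inter>k\<in>UNIV. C k)"
    then have "\<phi> \<in> C (i, j)" for i j by blast
    then show "\<phi> \<in> Aset" unfolding C_def Aset_def by auto
  next
    fix \<phi> assume "\<phi> \<in> Aset"
    then show "\<phi> \<in> (\<Inter>k\<in>UNIV. C k)" unfolding C_def Aset_def by auto
  qed
  ultimately show ?thesis by simp
qed

definition D :: "nat \<Rightarrow> (real \<Rightarrow> real) \<Rightarrow> real" where
  "D i \<phi> = real (LEAST j. \<phi> (pt i j) = 0)"

lemma strict_mono_pe: "strict_mono (\<lambda>j. prod_encode (i, j))"
  by (rule strict_monoI_Suc) (simp add: prod_encode_def)

lemma Aset_zero_exists: assumes "\<phi> \<in> Aset" shows "\<exists>j. \<phi> (pt i j) = 0"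
proof -
  have "\<phi> \<in> topspace CS" "\<phi> 0 = 0" using assms by (auto simp: Aset_def)
  then have "(\<lambda>n. \<phi> (cs n)) \<longlonglongrightarrow> 0" by (simp add: in_CS)
  then have "((\<lambda>n. \<phi> (cs n)) \<circ> (\<lambda>j. prod_encode (i, j))) \<longlonglongrightarrow> 0"
    by (rule LIMSEQ_subseq_LIMSEQ[OF _ strict_mono_pe])
  then have "(\<lambda>j. \<phi> (pt i j)) \<longlonglongrightarrow> 0" by (simp add: o_def pt_def)
  then obtain j where "\<bar>\<phi> (pt i j)\<bar> < wt i"
    using wt_pos[of i] unfolding LIMSEQ_iff by fastforce
  moreover have "\<phi> (pt i j) = 0 \<or> \<phi> (pt i j) = wt i" using assms by (auto simp: Aset_def)
  ultimately show ?thesis using wt_pos[of i] by auto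
qed

lemma D_cont: "continuous_map (subtopology CS Aset) euclideanreal (D i)"
proof (rule continuous_map_pointwise)
  fix \<phi>0 V assume \<phi>0: "\<phi>0 \<in> topspace (subtopology CS Aset)" and V: "openin euclideanreal V" "D i \<phi>0 \<in> V"
  have A0: "\<phi>0 \<in> Aset" using \<phi>0 Aset_sub by auto
  define k where "k = (LEAST j. \<phi>0 (pt i j) = 0)"
  have k0: "\<phi>0 (pt i k) = 0" unfolding k_def by (rule LeastI_ex[OF Aset_zero_exists[OF A0]])
  have kj: "\<phi>0 (pt i j) = wt i" if "j < k" for j
  proof -
    have "\<phi>0 (pt i j) \<noteq> 0" using not_less_Least[OF that[unfolded k_def]] .
    then show ?thesis using A0 by (auto simp: Aset_def)
  qed
  define U where "U = {\<phi> \<in> topspace (subtopology CS Aset). True \<and> (\<forall>j<Suc k. \<bar>\<phi> (pt i j) - \<phi>0 (pt i j)\<bar> < wt i / 2)}"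
  have "openin (subtopology CS Aset) U"
    unfolding U_def
  proof (rule openin_nat_conj)
    have eqT: "{x \<in> topspace (subtopology CS Aset). True} = topspace (subtopology CS Aset)" by blast
    show "openin (subtopology CS Aset) {x \<in> topspace (subtopology CS Aset). True}"
      unfolding eqT by (rule openin_topspace)
    fix j
    show "openin (subtopology CS Aset) {x \<in> topspace (subtopology CS Aset). \<bar>x (pt i j) - \<phi>0 (pt i j)\<bar> < wt i / 2}"
      by (rule openin_less) (intro continuous_intros continuous_map_from_subtopology CS_proj pt_in)
  qed
  moreover have "\<phi>0 \<in> U" using \<phi>0 wt_pos[of i] by (simp add: U_def)
  moreover have "D i \<phi> \<in> V" if "\<phi> \<in> U" for \<phi>
  proof -
    have A: "\<phi> \<in> Aset" using that Aset_sub by (auto simp: U_def)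
    have cl: "\<And>j. j < Suc k \<Longrightarrow> \<bar>\<phi> (pt i j) - \<phi>0 (pt i j)\<bar> < wt i / 2" using that by (auto simp: U_def)
    have vals: "\<phi> (pt i j) = 0 \<or> \<phi> (pt i j) = wt i" for j using A by (auto simp: Aset_def)
    have "(LEAST j. \<phi> (pt i j) = 0) = k"
    proof (rule Least_equality)
      have "\<bar>\<phi> (pt i k)\<bar> < wt i / 2" using cl[of k] k0 by simp
      then show "\<phi> (pt i k) = 0" using vals[of k] wt_pos[of i] by auto
    next
      fix j assume j: "\<phi> (pt i j) = 0"
      show "k \<le> j"
      proof (rule ccontr)
        assume "\<not> k \<le> j"
        then have "j < k" by simp
        then have "\<bar>\<phi> (pt i j) - wt i\<bar> < wt i / 2" using cl[of j] kj[of j] by simp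
        then show False using j wt_pos[of i] by simp
      qed
    qed
    then have "D i \<phi> = D i \<phi>0" by (simp add: D_def k_def)
    then show ?thesis using V(2) by simp
  qed
  ultimately show "\<exists>U. openin (subtopology CS Aset) U \<and> \<phi>0 \<in> U \<and> (\<forall>y\<in>U. D i y \<in> V)" by blast
qed simp

definition phia :: "(nat \<Rightarrow> nat) \<Rightarrow> real \<Rightarrow> real" where
  "phia a x = (if x \<in> conv_seq then (if x \<noteq> 0 then
     (case prod_decode (nat \<lfloor>1/x\<rfloor> - 1) of (i, j) \<Rightarrow> if j < a i then wt i else 0) else 0) else undefined)"

lemma phia_cs: "phia a (cs n) = (case prod_decode n of (i, j) \<Rightarrow> if j < a i then wt i else 0)"
  using cs_floor[of n] by (simp add: phia_def)

lemma phia_pt: "phia a (pt i j) = (if j < a i then wt i else 0)"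
  by (simp add: pt_def phia_cs)

lemma phia_0 [simp]: "phia a 0 = 0" by (simp add: phia_def)

lemma phia_in: "phia a \<in> topspace CS"
  unfolding in_CS
proof
  show "phia a \<in> extensional conv_seq" by (simp add: phia_def extensional_def)
  show "(\<lambda>n. phia a (cs n)) \<longlonglongrightarrow> phia a 0"
    unfolding LIMSEQ_iff
  proof (intro allI impI)
    fix r :: real assume r: "0 < r"
    define I where "I = nat \<lceil>1/r\<rceil>"
    define Mx where "Mx = Max (a ` {..I})"
    have "finite (prod_encode ` ({..I} \<times> {..Mx}))" by simp
    then obtain no where no: "prod_encode ` ({..I} \<times> {..Mx}) \<subseteq> {..<no}"
      using finite_nat_bounded by blast
    show "\<exists>no. \<forall>n\<ge>no. norm (phia a (cs n) - phia a 0) < r"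
    proof (intro exI allI impI)
      fix n assume n: "no \<le> n"
      obtain i j where ij: "prod_decode n = (i, j)" by fastforce
      have nij: "n = prod_encode (i, j)" using ij by (metis prod_decode_inverse)
      show "norm (phia a (cs n) - phia a 0) < r"
      proof (cases "j < a i")
        case False then show ?thesis using r by (simp add: phia_cs ij)
      next
        case True
        have "\<not> i \<le> I"
        proof
          assume iI: "i \<le> I"
          then have "a i \<le> Mx" unfolding Mx_def by (intro Max_ge) auto
          then have "n \<in> prod_encode ` ({..I} \<times> {..Mx})" using iI True nij by auto
          then show False using no n by auto
        qed
        then have "1/r < real i + 1" unfolding I_def by linarith
        then have "wt i < r" using r unfolding wt_def by (simp add: field_simps)
        then show ?thesis using True wt_pos[of i] by (simp add: phia_cs ij)
      qed
    qed
  qed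
qed

lemma phia_Aset: "phia a \<in> Aset"
  using phia_in wt_pos by (auto simp: Aset_def phia_pt less_imp_le)

lemma D_phia: "D i (phia a) = real (a i)"
proof -
  have "(LEAST j. phia a (pt i j) = 0) = a i"
    by (rule Least_equality) (use wt_pos[of i] in \<open>auto simp: phia_pt split: if_splits\<close>)
  then show ?thesis by (simp add: D_def)
qed

lemma pi_exists:
  obtains \<pi> where "continuous_map CS (powertop_real UNIV) \<pi>" "\<And>a. \<pi> (phia a) = (\<lambda>i. real (a i))"
proof -
  have "\<exists>g. continuous_map CS euclideanreal g \<and> (\<forall>x\<in>Aset. g x = D i x)" for i
  proof -
    obtain g where "continuous_map CS euclideanreal g" "\<And>x. x \<in> Aset \<Longrightarrow> g x = D i x"
      using Tietze_extension_realinterval[OF normal_CS closedin_Aset, of UNIV "D i"] D_cont by auto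
    then show ?thesis by blast
  qed
  then obtain G where G: "\<And>i. continuous_map CS euclideanreal (G i)" "\<And>i x. x \<in> Aset \<Longrightarrow> G i x = D i x"
    by metis
  show ?thesis
  proof
    show "continuous_map CS (powertop_real UNIV) (\<lambda>x i. G i x)"
      using G(1) by (simp add: continuous_map_componentwise_UNIV)
    fix a show "(\<lambda>i. G i (phia a)) = (\<lambda>i. real (a i))"
      using G(2)[OF phia_Aset] by (simp add: D_phia)
  qed
qed

lemma forward:
  fixes E :: "'a::real_vector topology"
  assumes "locally_convex_space E" "analytic_space E"
  shows "continuous_image_of E CS"
proof -
  have E: "tvs E" and lc: "\<And>x U. openin E U \<Longrightarrow> x \<in> U \<Longrightarrow> \<exists>V. openin E V \<and> convex V \<and> x \<in> V \<and> V \<subseteq> U"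
    using assms(1) unfolding locally_convex_space_def by blast+
  obtain f where f: "continuous_map baire_space E f" "f ` topspace baire_space = topspace E"
    using assms(2) unfolding analytic_space_def continuous_image_of_def by blast
  obtain \<pi> where \<pi>: "continuous_map CS (powertop_real UNIV) \<pi>" "\<And>a. \<pi> (phia a) = (\<lambda>i. real (a i))"
    using pi_exists by blast
  have c: "continuous_map CS E (Phi f \<circ> \<pi>)"
    using continuous_map_compose[OF \<pi>(1) Phi_cont[OF E lc f(1)]] by blast
  have "(Phi f \<circ> \<pi>) ` topspace CS = topspace E"
  proof
    show "(Phi f \<circ> \<pi>) ` topspace CS \<subseteq> topspace E" using E by (simp add: tvs_def)
    show "topspace E \<subseteq> (Phi f \<circ> \<pi>) ` topspace CS"
    proof
      fix y assume "y \<in> topspace E"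
      then obtain a where a: "y = f a" using f(2) by auto
      have "(Phi f \<circ> \<pi>) (phia a) = y" using a by (simp add: \<pi>(2) Phi_nat)
      then show "y \<in> (Phi f \<circ> \<pi>) ` topspace CS" using phia_in by (metis imageI)
    qed
  qed
  then show ?thesis using c unfolding continuous_image_of_def by blast
qed

section \<open>The Baire space maps onto the reals\<close>

lemma baire_proj: "continuous_map baire_space (discrete_topology UNIV) (\<lambda>x. x k)"
  unfolding baire_space_def by (rule continuous_map_product_projection) simp

lemma baire_coord_fun: "continuous_map baire_space euclideanreal (\<lambda>x. h (x k))"
proof -
  have "continuous_map (discrete_topology UNIV) euclideanreal h" by simp
  from continuous_map_compose[OF baire_proj this] show ?thesis by (simp add: o_def)
qed

definition rmap :: "(nat \<Rightarrow> nat) \<Rightarrow> real" where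
  "rmap x = real_of_int (int_decode (x 0)) + (\<Sum>k. real (x (Suc k) mod 2) / 2^(Suc k))"

lemma rmap_cont: "continuous_map baire_space euclideanreal rmap"
proof -
  have "continuous_map baire_space euclideanreal (\<lambda>x. \<Sum>k. real (x (Suc k) mod 2) / 2^(Suc k))"
  proof (rule continuous_map_real_series[where b="\<lambda>k. (1/2)^(Suc k)"])
    show "continuous_map baire_space euclideanreal (\<lambda>x. real (x (Suc k) mod 2) / 2 ^ Suc k)" for k
      by (rule baire_coord_fun)
    show "\<bar>real (x (Suc k) mod 2) / 2 ^ Suc k\<bar> \<le> (1 / 2) ^ Suc k" for k x
    proof -
      have "real (x (Suc k) mod 2) \<le> 1" by simp
      then show ?thesis by (simp add: power_one_over divide_right_mono)
    qed
    show "summable (\<lambda>k. (1/2::real)^(Suc k))" by (simp add: summable_geometric summable_mult)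
  qed
  moreover have "continuous_map baire_space euclideanreal (\<lambda>x. real_of_int (int_decode (x 0)))"
    by (rule baire_coord_fun)
  ultimately show ?thesis unfolding rmap_def[abs_def] by (rule continuous_map_add[rotated])
qed

lemma floor_digit: fixes y :: real shows "\<lfloor>2 * y\<rfloor> - 2 * \<lfloor>y\<rfloor> \<in> {0, 1::int}"
proof -
  have "real_of_int (2 * \<lfloor>y\<rfloor>) \<le> 2 * y" by simp
  then have "2 * \<lfloor>y\<rfloor> \<le> \<lfloor>2 * y\<rfloor>" by (simp only: le_floor_iff)
  moreover have "\<lfloor>2 * y\<rfloor> < 2 * \<lfloor>y\<rfloor> + 2"
  proof -
    have "y < real_of_int \<lfloor>y\<rfloor> + 1" by linarith
    then have "2 * y < real_of_int (2 * \<lfloor>y\<rfloor> + 2)" by simp linarith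
    then show ?thesis by (simp add: floor_less_iff)
  qed
  ultimately show ?thesis by auto
qed

lemma rmap_surj: "\<exists>x. rmap x = t"
proof -
  define d where "d k = \<lfloor>2^(Suc k) * t\<rfloor> - 2 * \<lfloor>2^k * t\<rfloor>" for k
  have d01: "d k \<in> {0, 1}" for k
    using floor_digit[of "2^k * t"] by (simp add: d_def mult.assoc)
  define x where "x n = (if n = 0 then int_encode \<lfloor>t\<rfloor> else nat (d (n - 1)))" for n
  have xd: "real (x (Suc k) mod 2) = real_of_int (d k)" for k
    using d01[of k] by (auto simp: x_def)
  define F where "F k = real_of_int \<lfloor>2^k * t\<rfloor> / 2^k" for k
  have step: "real_of_int (d k) / 2^(Suc k) = F (Suc k) - F k" for k
    by (simp add: d_def F_def field_simps)
  have "(\<lambda>n. F n) \<longlonglongrightarrow> t"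
  proof -
    have "(\<lambda>n. t - F n) \<longlonglongrightarrow> 0"
    proof (rule Lim_null_comparison)
      show "\<forall>\<^sub>F n in sequentially. norm (t - F n) \<le> inverse (2^n)"
      proof (intro always_eventually allI)
        fix n
        have "0 \<le> 2^n * t - real_of_int \<lfloor>2^n * t\<rfloor>" "2^n * t - real_of_int \<lfloor>2^n * t\<rfloor> < 1" by linarith+
        moreover have eq: "t - F n = (2^n * t - real_of_int \<lfloor>2^n * t\<rfloor>) / 2^n" by (simp add: F_def field_simps)
        ultimately have "0 \<le> t - F n" "t - F n \<le> 1 / 2^n"
          by (simp_all only: eq) (simp_all add: divide_right_mono)
        then have "0 \<le> t - F n" "t - F n \<le> inverse (2^n)" by (simp_all add: inverse_eq_divide)
        then show "norm (t - F n) \<le> inverse (2^n)" by simp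
      qed
      show "(\<lambda>n. inverse ((2::real)^n)) \<longlonglongrightarrow> 0" by (rule LIMSEQ_inverse_realpow_zero) simp
    qed
    then have "(\<lambda>n. t - (t - F n)) \<longlonglongrightarrow> t - 0" by (intro tendsto_diff tendsto_const)
    then show ?thesis by simp
  qed
  then have "(\<lambda>n. F n - F 0) \<longlonglongrightarrow> t - F 0" by (intro tendsto_diff tendsto_const)
  moreover have "(\<lambda>n. \<Sum>k<n. real (x (Suc k) mod 2) / 2^(Suc k)) = (\<lambda>n. F n - F 0)"
    by (simp only: xd step sum_lessThan_telescope)
  ultimately have "(\<lambda>n. \<Sum>k<n. real (x (Suc k) mod 2) / 2^(Suc k)) \<longlonglongrightarrow> t - F 0" by simp
  then have "(\<lambda>k. real (x (Suc k) mod 2) / 2^(Suc k)) sums (t - F 0)" by (simp add: sums_def)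
  then have "(\<Sum>k. real (x (Suc k) mod 2) / 2^(Suc k)) = t - real_of_int \<lfloor>t\<rfloor>"
    by (simp add: sums_iff F_def)
  then have "rmap x = t" by (simp add: rmap_def x_def)
  then show ?thesis by blast
qed

section \<open>The Baire space maps onto Cp(S)\<close>

definition sub :: "nat \<Rightarrow> (nat \<Rightarrow> nat) \<Rightarrow> nat \<Rightarrow> nat" where "sub k x = (\<lambda>i. x (prod_encode (k, i)))"
definition Md :: "(nat \<Rightarrow> nat) \<Rightarrow> nat \<Rightarrow> nat" where "Md x j = (\<Sum>i\<le>j. x (prod_encode (1, i)) + 1)"
definition Jn :: "(nat \<Rightarrow> nat) \<Rightarrow> nat \<Rightarrow> nat" where "Jn x n = (LEAST j. n < Md x j)"
definition Lm :: "(nat \<Rightarrow> nat) \<Rightarrow> real" where "Lm x = rmap (sub 0 x)"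
definition Rn :: "(nat \<Rightarrow> nat) \<Rightarrow> nat \<Rightarrow> real" where "Rn x n = rmap (sub (n + 2) x)"
definition clampr :: "real \<Rightarrow> real \<Rightarrow> real" where "clampr e y = max (- e) (min e y)"
definition vl :: "(nat \<Rightarrow> nat) \<Rightarrow> nat \<Rightarrow> real" where
  "vl x n = Lm x + (if Jn x n = 0 then Rn x n else clampr (1/2^(Jn x n)) (Rn x n))"
definition Tm :: "(nat \<Rightarrow> nat) \<Rightarrow> real \<Rightarrow> real" where
  "Tm x = (\<lambda>p. if p \<in> conv_seq then (if p = 0 then Lm x else vl x (nat \<lfloor>1/p\<rfloor> - 1)) else undefined)"

lemma sub_cont: "continuous_map baire_space baire_space (sub k)"
  unfolding baire_space_def sub_def continuous_map_componentwise_UNIV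
  by (intro allI continuous_map_product_projection) simp

lemma Lm_cont: "continuous_map baire_space euclideanreal Lm"
  using continuous_map_compose[OF sub_cont rmap_cont] by (simp add: Lm_def[abs_def] o_def)

lemma Rn_cont: "continuous_map baire_space euclideanreal (\<lambda>x. Rn x n)"
  using continuous_map_compose[OF sub_cont rmap_cont] by (simp add: Rn_def[abs_def] o_def)

lemma Md_ge: "j < Md x j"
proof -
  have "(\<Sum>i\<le>j. (1::nat)) \<le> Md x j" unfolding Md_def by (rule sum_mono) simp
  then show ?thesis by simp
qed

lemma Md_mono: "j \<le> k \<Longrightarrow> Md x j \<le> Md x k"
  unfolding Md_def by (rule sum_mono2) auto

lemma Jn_spec: "n < Md x (Jn x n)"
  unfolding Jn_def by (rule LeastI[of _ n]) (rule Md_ge)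

lemma Jn_large: assumes "Md x K \<le> n" shows "K < Jn x n"
proof (rule ccontr)
  assume "\<not> K < Jn x n"
  then have "Md x (Jn x n) \<le> Md x K" by (intro Md_mono) simp
  then show False using Jn_spec[of n x] assms by simp
qed

lemma Jn_prop: assumes "0 < Jn x n" shows "Md x (Jn x n - 1) \<le> n"
proof -
  have "\<not> n < Md x (Jn x n - 1)"
    unfolding Jn_def by (rule not_less_Least) (use assms in \<open>simp add: Jn_def\<close>)
  then show ?thesis by simp
qed

lemma Jn_local:
  assumes "\<forall>i<Suc n. x (prod_encode (1, i)) = y (prod_encode (1, i))"
  shows "Jn x n = Jn y n"
proof -
  have eq: "Md x j = Md y j" if "j \<le> n" for j
    unfolding Md_def by (rule sum.cong) (use assms that in auto)
  have le: "Jn y n \<le> n" unfolding Jn_def by (rule Least_le) (rule Md_ge)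
  show ?thesis
    unfolding Jn_def
  proof (rule Least_equality)
    show "n < Md x (LEAST j. n < Md y j)"
      using Jn_spec[of n y] eq[OF le] by (simp add: Jn_def)
  next
    fix j assume j: "n < Md x j"
    show "(LEAST j. n < Md y j) \<le> j"
    proof (cases "j \<le> n")
      case True
      then have "n < Md y j" using j eq by simp
      then show ?thesis by (rule Least_le)
    next
      case False then show ?thesis using le by (simp add: Jn_def)
    qed
  qed
qed

lemma baire_open_eq: "openin baire_space {x. x k = c}"
  using openin_continuous_map_preimage[OF baire_proj, of "{c}" k] by simp

lemma baire_open_UNIV: "openin baire_space UNIV"
  using openin_topspace[of baire_space] by simp

lemma clampr_abs: "0 \<le> e \<Longrightarrow> \<bar>clampr e y\<bar> \<le> e"
  by (auto simp: clampr_def)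

lemma clampr_id: "\<bar>y\<bar> \<le> e \<Longrightarrow> clampr e y = y"
  by (auto simp: clampr_def)

lemma vl_cont: "continuous_map baire_space euclideanreal (\<lambda>x. vl x n)"
proof (rule continuous_map_locally_eq)
  fix x0 :: "nat \<Rightarrow> nat"
  define J0 where "J0 = Jn x0 n"
  define U where "U = {x \<in> topspace baire_space. True \<and> (\<forall>i<Suc n. x (prod_encode (1, i)) = x0 (prod_encode (1, i)))}"
  have "openin baire_space U" unfolding U_def
    by (rule openin_nat_conj) (simp_all add: baire_open_eq baire_open_UNIV)
  moreover have "x0 \<in> U" by (simp add: U_def)
  moreover have "continuous_map baire_space euclideanreal
      (\<lambda>x. Lm x + (if J0 = 0 then Rn x n else clampr (1/2^J0) (Rn x n)))"
    unfolding clampr_def by (auto intro!: continuous_intros Lm_cont Rn_cont)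
  moreover have "\<forall>y\<in>U. vl y n = Lm y + (if J0 = 0 then Rn y n else clampr (1/2^J0) (Rn y n))"
  proof
    fix y assume "y \<in> U"
    then have "Jn y n = J0" unfolding J0_def by (intro Jn_local) (simp add: U_def)
    then show "vl y n = Lm y + (if J0 = 0 then Rn y n else clampr (1/2^J0) (Rn y n))"
      by (simp add: vl_def)
  qed
  ultimately show "\<exists>U g. openin baire_space U \<and> x0 \<in> U \<and> continuous_map baire_space euclideanreal g \<and> (\<forall>y\<in>U. vl y n = g y)"
    by blast
qed

lemma Tm_cs: "Tm x (cs n) = vl x n"
  using cs_floor[of n] by (simp add: Tm_def)

lemma Tm_0: "Tm x 0 = Lm x"
  by (simp add: Tm_def)

lemma Tm_in: "Tm x \<in> topspace CS"
  unfolding in_CS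
proof
  show "Tm x \<in> extensional conv_seq" by (simp add: Tm_def extensional_def)
  show "(\<lambda>n. Tm x (cs n)) \<longlonglongrightarrow> Tm x 0"
    unfolding Tm_cs Tm_0 LIMSEQ_iff
  proof (intro allI impI)
    fix r :: real assume r: "0 < r"
    obtain K where K: "(1/2::real)^K < r" using real_arch_pow_inv[OF r, of "1/2"] by auto
    show "\<exists>no. \<forall>n\<ge>no. norm (vl x n - Lm x) < r"
    proof (intro exI allI impI)
      fix n assume "Md x K \<le> n"
      then have JK: "K < Jn x n" by (rule Jn_large)
      have "\<bar>clampr (1/2^(Jn x n)) (Rn x n)\<bar> \<le> 1/2^(Jn x n)" by (rule clampr_abs) simp
      also have "(1::real)/2^(Jn x n) \<le> 1/2^K" using JK by (simp add: field_simps)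
      also have "\<dots> < r" using K by (simp add: power_one_over)
      finally show "norm (vl x n - Lm x) < r" using JK by (simp add: vl_def)
    qed
  qed
qed

lemma Tm_cont: "continuous_map baire_space CS Tm"
  unfolding Cp_def
proof (rule continuous_map_into_subtopology)
  show "continuous_map baire_space (powertop_real conv_seq) Tm"
    unfolding continuous_map_componentwise
  proof
    show "Tm ` topspace baire_space \<subseteq> extensional conv_seq" by (auto simp: Tm_def extensional_def)
    show "\<forall>k\<in>conv_seq. continuous_map baire_space euclideanreal (\<lambda>x. Tm x k)"
    proof
      fix p assume "p \<in> conv_seq"
      then consider "p = 0" | n where "p = cs n" using conv_seq_iff by blast
      then show "continuous_map baire_space euclideanreal (\<lambda>x. Tm x p)"
      proof cases
        case 1 then show ?thesis using Lm_cont by (simp add: Tm_0)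
      next
        case 2 then show ?thesis using vl_cont by (simp add: Tm_cs)
      qed
    qed
  qed
  show "Tm \<in> topspace baire_space \<rightarrow> {f \<in> extensional conv_seq. continuous_on conv_seq f}"
    using Tm_in by (auto simp: topspace_CS)
qed

lemma Tm_surj:
  assumes "\<phi> \<in> topspace CS"
  shows "\<exists>x. Tm x = \<phi>"
proof -
  define L where "L = \<phi> 0"
  define d where "d n = \<phi> (cs n) - L" for n
  have ext: "\<phi> \<in> extensional conv_seq" and lim: "(\<lambda>n. \<phi> (cs n)) \<longlonglongrightarrow> \<phi> 0"
    using assms by (auto simp: in_CS)
  have "(\<lambda>n. \<phi> (cs n) - L) \<longlonglongrightarrow> \<phi> 0 - L" by (intro tendsto_diff lim tendsto_const)
  then have dlim: "d \<longlonglongrightarrow> 0" by (simp add: d_def[abs_def] L_def)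
  have "\<exists>N. \<forall>n\<ge>N. \<bar>d n\<bar> < 1/2^(Suc k)" for k
  proof -
    have "(0::real) < 1/2^(Suc k)" by simp
    then show ?thesis using dlim unfolding LIMSEQ_iff by (metis real_norm_def diff_zero)
  qed
  then obtain Nk where Nk: "\<And>k n. Nk k \<le> n \<Longrightarrow> \<bar>d n\<bar> < 1/2^(Suc k)" by metis
  obtain rinv where rinv: "\<And>t. rmap (rinv t) = t" using rmap_surj by metis
  define x where "x m = (case prod_decode m of (k, i) \<Rightarrow>
      if k = 0 then rinv L i else if k = 1 then Nk i else rinv (d (k - 2)) i)" for m
  have sub0: "sub 0 x = rinv L" by (simp add: sub_def x_def)
  have subn: "sub (n + 2) x = rinv (d n)" for n by (simp add: sub_def x_def)
  have x1: "x (prod_encode (1, i)) = Nk i" for i by (simp add: x_def)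
  have LmL: "Lm x = L" by (simp add: Lm_def sub0 rinv)
  have Rnd: "Rn x n = d n" for n unfolding Rn_def subn rinv ..
  have NkMd: "Nk j \<le> Md x j" for j
  proof -
    have "Nk j + 1 \<le> Md x j" unfolding Md_def x1
      by (rule member_le_sum[where i=j and f="\<lambda>i. Nk i + 1"]) auto
    then show ?thesis by simp
  qed
  have vlx: "vl x n = L + d n" for n
  proof (cases "Jn x n = 0")
    case True then show ?thesis by (simp add: vl_def LmL Rnd)
  next
    case False
    then have "Md x (Jn x n - 1) \<le> n" by (intro Jn_prop) simp
    then have "Nk (Jn x n - 1) \<le> n" using NkMd[of "Jn x n - 1"] by linarith
    then have "\<bar>d n\<bar> < 1/2^(Suc (Jn x n - 1))" by (rule Nk)
    moreover have "Suc (Jn x n - 1) = Jn x n" using False by simp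
    ultimately have "\<bar>Rn x n\<bar> \<le> 1/2^(Jn x n)" by (simp add: Rnd)
    then show ?thesis using False by (simp add: vl_def LmL Rnd clampr_id)
  qed
  have "Tm x = \<phi>"
  proof
    fix p
    show "Tm x p = \<phi> p"
    proof (cases "p \<in> conv_seq")
      case True
      then consider "p = 0" | n where "p = cs n" using conv_seq_iff by blast
      then show ?thesis
      proof cases
        case 1 then show ?thesis by (simp add: Tm_0 LmL L_def)
      next
        case 2 then show ?thesis by (simp add: Tm_cs vlx d_def)
      qed
    next
      case False
      then show ?thesis using ext by (simp add: Tm_def extensional_def)
    qed
  qed
  then show ?thesis by blast
qed

lemma backward:
  assumes "continuous_image_of E CS"
  shows "analytic_space E"
proof -
  obtain g where g: "continuous_map CS E g" "g ` topspace CS = topspace E"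
    using assms unfolding continuous_image_of_def by blast
  have "Tm ` topspace baire_space = topspace CS"
    using Tm_in Tm_surj by (auto simp: image_iff) (metis)
  then have "(g \<circ> Tm) ` topspace baire_space = topspace E" using g(2) by (metis image_comp)
  moreover have "continuous_map baire_space E (g \<circ> Tm)"
    by (rule continuous_map_compose[OF Tm_cont g(1)])
  ultimately show ?thesis unfolding analytic_space_def continuous_image_of_def by blast
qed

theorem proposition3p1:
  fixes E :: "'a::real_vector topology"
  assumes "locally_convex_space E"
  shows "analytic_space E \<longleftrightarrow> continuous_image_of E (Cp conv_seq)"
  using forward[OF assms] backward by blast

end
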